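(* Let $\mathcal H$ be a complex Hilbert space and $A,X,B\in\mathcal B(\mathcal H)$ with $X$ positive. Then for all $x,y\in\mathcal H$ with $Bx\neq0$, $$|\langle AXBx,y\rangle|\le\frac{\|X\|}{2}\left(2\|Bx\|\,\|A^*y\|-\frac{\inf_{\lambda\in\mathbb C}\|Bx-\lambda A^*y\|^2}{2\|Bx\|}\,\|A^*y\|\right).$$
   Context: $\|X\|$ is the operator norm. *)

theory Defs
  imports "HOL-Analysis.Analysis"
begin

text \<open>Complex inner product spaces (no such class exists in the distribution).
  The inner product is linear in the first argument, conjugate-linear in the second.\<close>

class complex_inner = real_normed_vector +
  fixes scaleC :: "complex \<Rightarrow> 'a \<Rightarrow> 'a" (infixr "*\<^sub>C" 75)
    and cinner :: "'a \<Rightarrow> 'a \<Rightarrow> complex"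
  assumes scaleC_add_right: "a *\<^sub>C (x + y) = a *\<^sub>C x + a *\<^sub>C y"
    and scaleC_add_left: "(a + b) *\<^sub>C x = a *\<^sub>C x + b *\<^sub>C x"
    and scaleC_scaleC: "a *\<^sub>C (b *\<^sub>C x) = (a * b) *\<^sub>C x"
    and scaleC_one: "1 *\<^sub>C x = x"
    and scaleR_scaleC: "scaleR r x = complex_of_real r *\<^sub>C x"
    and cinner_commute: "cinner x y = cnj (cinner y x)"
    and cinner_add_left: "cinner (x + y) z = cinner x z + cinner y z"
    and cinner_scaleC_left: "cinner (a *\<^sub>C x) y = a * cinner x y"
    and cinner_nonneg: "0 \<le> Re (cinner x x)"
    and cinner_eq_zero_iff: "cinner x x = 0 \<longleftrightarrow> x = 0"
    and norm_eq_sqrt_cinner: "norm x = sqrt (Re (cinner x x))"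

class chilbert_space = complex_inner + complete_space

definition clinear :: "('a::complex_inner \<Rightarrow> 'b::complex_inner) \<Rightarrow> bool" where
  "clinear f \<longleftrightarrow> (\<forall>x y. f (x + y) = f x + f y) \<and> (\<forall>c x. f (c *\<^sub>C x) = c *\<^sub>C f x)"

definition bounded_clinear :: "('a::complex_inner \<Rightarrow> 'b::complex_inner) \<Rightarrow> bool" where
  "bounded_clinear f \<longleftrightarrow> clinear f \<and> (\<exists>K. \<forall>x. norm (f x) \<le> norm x * K)"

definition is_adjoint :: "('a::complex_inner \<Rightarrow> 'a) \<Rightarrow> ('a \<Rightarrow> 'a) \<Rightarrow> bool" where
  "is_adjoint A A' \<longleftrightarrow> (\<forall>x y. cinner (A x) y = cinner x (A' y))"

definition positive_op :: "('a::complex_inner \<Rightarrow> 'a) \<Rightarrow> bool" where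
  "positive_op X \<longleftrightarrow> (\<forall>x. Im (cinner (X x) x) = 0 \<and> 0 \<le> Re (cinner (X x) x))"

end

theory Submission
  imports Defs
begin

lemma ci_zero_left: "cinner (0::'a::complex_inner) z = 0"
  using cinner_add_left[of "0::'a" 0 z] by simp

lemma ci_minus_left: "cinner (- x::'a::complex_inner) z = - cinner x z"
proof -
  have "cinner x z + cinner (-x) z = 0" using cinner_add_left[of x "-x" z] by (simp add: ci_zero_left)
  thus ?thesis by (simp only: add_eq_0_iff)
qed

lemma ci_diff_left: "cinner (x - y::'a::complex_inner) z = cinner x z - cinner y z"
  using cinner_add_left[of x "-y" z] ci_minus_left[of y z] by simp

lemma ci_add_right: "cinner (z::'a::complex_inner) (x + y) = cinner z x + cinner z y"
  by (simp add: cinner_commute[of z "x+y"] cinner_commute[of z x] cinner_commute[of z y] cinner_add_left)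

lemma ci_diff_right: "cinner (z::'a::complex_inner) (x - y) = cinner z x - cinner z y"
  by (simp add: cinner_commute[of z "x-y"] cinner_commute[of z x] cinner_commute[of z y] ci_diff_left)

lemma ci_zero_right: "cinner (z::'a::complex_inner) 0 = 0"
  by (simp add: cinner_commute[of z 0] ci_zero_left)

lemma ci_scaleC_right: "cinner (x::'a::complex_inner) (a *\<^sub>C y) = cnj a * cinner x y"
  by (simp add: cinner_commute[of x "a *\<^sub>C y"] cinner_commute[of x y] cinner_scaleC_left)

lemma ci_self_real: "cinner (x::'a::complex_inner) x = complex_of_real ((norm x)^2)"
proof -
  have "Im (cinner x x) = - Im (cinner x x)"
    using arg_cong[OF cinner_commute[of x x], of Im] by simp
  hence "Im (cinner x x) = 0" by simp
  moreover have "(norm x)^2 = Re (cinner x x)"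
    using norm_eq_sqrt_cinner[of x] cinner_nonneg[of x] by simp
  ultimately show ?thesis by (simp add: complex_eq_iff)
qed

lemma clinear_diff: "clinear f \<Longrightarrow> f (x - y) = f x - f y"
proof -
  assume "clinear f"
  hence "f (x - y + y) = f (x - y) + f y" unfolding clinear_def by blast
  hence "f x = f (x - y) + f y" by simp
  thus ?thesis by (simp add: eq_diff_eq)
qed

lemma expand_sq: "cinner (u - l *\<^sub>C v) (u - l *\<^sub>C (v::'a::complex_inner))
   = cinner u u - cnj l * cinner u v - l * cinner v u + l * cnj l * cinner v v"
  by (simp add: ci_diff_left ci_diff_right cinner_scaleC_left ci_scaleC_right algebra_simps)


lemma norm_scaleC: "norm (a *\<^sub>C (x::'a::complex_inner)) = cmod a * norm x"
proof -
  have e: "cinner (a *\<^sub>C x) (a *\<^sub>C x) = cnj a * (a * cinner x x)"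
    by (simp add: cinner_scaleC_left ci_scaleC_right)
  have m: "cnj a * a = complex_of_real ((cmod a)^2)"
    using complex_norm_square[of a] by (simp only: of_real_power mult.commute)
  have "complex_of_real ((norm (a *\<^sub>C x))^2) = cnj a * (a * complex_of_real ((norm x)^2))"
    using e by (simp only: ci_self_real)
  also have "\<dots> = (cnj a * a) * complex_of_real ((norm x)^2)" by (simp only: mult.assoc)
  also have "\<dots> = complex_of_real ((cmod a * norm x)^2)" by (simp only: m of_real_mult power_mult_distrib)
  finally have "(norm (a *\<^sub>C x))^2 = (cmod a * norm x)^2" by (simp only: of_real_eq_iff)
  thus ?thesis by (simp add: power2_eq_iff_nonneg)
qed

lemma dist_lemma:
  fixes u v :: "'a::complex_inner"
  assumes "v \<noteq> 0"
  shows "(norm (u - (cinner u v / cinner v v) *\<^sub>C v))^2 = (norm u)^2 - (cmod (cinner u v))^2 / (norm v)^2"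
proof -
  define w where "w = cinner u v"
  define N where "N = (norm v)^2"
  define K where "K = (cmod w)^2 / N"
  define l where "l = w / complex_of_real N"
  have N: "N > 0" using assms by (simp add: N_def)
  have vv: "cinner v v = complex_of_real N" by (simp add: N_def ci_self_real)
  have vu: "cinner v u = cnj w" by (simp add: w_def cinner_commute[of v u])
  have ww: "w * cnj w = complex_of_real ((cmod w)^2)" using complex_norm_square[of w] by simp
  have c1: "cnj l * w = complex_of_real K"
  proof -
    have "cnj l * w = (w * cnj w) / complex_of_real N" by (simp add: l_def)
    also have "\<dots> = complex_of_real K" by (simp add: ww K_def)
    finally show ?thesis .
  qed
  have c2: "l * cnj w = complex_of_real K"
  proof -
    have "l * cnj w = (w * cnj w) / complex_of_real N" by (simp add: l_def)
    also have "\<dots> = complex_of_real K" by (simp add: ww K_def)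
    finally show ?thesis .
  qed
  have c3: "l * cnj l * complex_of_real N = complex_of_real K"
  proof -
    have "l * cnj l * complex_of_real N = (w * cnj w) / complex_of_real N"
      using N by (simp add: l_def power2_eq_square)
    also have "\<dots> = complex_of_real K" by (simp add: ww K_def)
    finally show ?thesis .
  qed
  have e: "cinner (u - l *\<^sub>C v) (u - l *\<^sub>C v)
     = cinner u u - cnj l * w - l * cnj w + l * cnj l * complex_of_real N"
    using expand_sq[of u l v] by (simp only: w_def[symmetric] vu vv)
  have "complex_of_real ((norm (u - l *\<^sub>C v))^2) = complex_of_real ((norm u)^2 - K)"
    unfolding ci_self_real[symmetric] e c1 c2 c3 by (simp add: ci_self_real)
  hence "(norm (u - l *\<^sub>C v))^2 = (norm u)^2 - K" using of_real_eq_iff by blast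
  moreover have "l = cinner u v / cinner v v" by (simp only: l_def w_def vv)
  ultimately show ?thesis by (simp only: K_def w_def N_def)
qed

lemma cs: "cmod (cinner u v) \<le> norm u * norm (v::'a::complex_inner)"
proof (cases "v = 0")
  case True thus ?thesis by (simp add: ci_zero_right)
next
  case False
  have "0 \<le> (norm u)^2 - (cmod (cinner u v))^2 / (norm v)^2"
    using dist_lemma[OF False, of u] by (metis zero_le_power2)
  hence "(cmod (cinner u v))^2 \<le> (norm u * norm v)^2" using False
    by (simp add: field_simps power_mult_distrib)
  thus ?thesis by (rule power2_le_imp_le) simp
qed


lemma clinear_zero: "clinear f \<Longrightarrow> f 0 = 0"
  using clinear_diff[of f 0 0] by simp

lemma herm:
  fixes X :: "'a::complex_inner \<Rightarrow> 'a"
  assumes lin: "clinear X" and pos: "positive_op X"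
  shows "cinner (X v) u = cnj (cinner (X u) v)"
proof -
  define a where "a = cinner (X u) v"
  define b where "b = cinner (X v) u"
  have Xadd: "X (p + q) = X p + X q" for p q using lin by (simp add: clinear_def)
  have Xsc: "X (c *\<^sub>C p) = c *\<^sub>C X p" for c p using lin by (simp add: clinear_def)
  have im0: "Im (cinner (X z) z) = 0" for z using pos by (simp add: positive_op_def)
  have "cinner (X (u + v)) (u + v) = cinner (X u) u + a + b + cinner (X v) v"
    by (simp add: Xadd cinner_add_left ci_add_right a_def b_def)
  hence "Im (cinner (X (u + v)) (u + v)) = Im (cinner (X u) u) + Im a + Im b + Im (cinner (X v) v)"
    by simp
  hence 1: "Im a + Im b = 0" using im0[of "u+v"] im0[of u] im0[of v] by simp
  have "cinner (X (u + \<i> *\<^sub>C v)) (u + \<i> *\<^sub>C v)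
      = cinner (X u) u + cnj \<i> * a + \<i> * b + \<i> * cnj \<i> * cinner (X v) v"
    by (simp add: Xadd Xsc cinner_add_left ci_add_right cinner_scaleC_left ci_scaleC_right a_def b_def
        algebra_simps)
  hence "Im (cinner (X u) u + cnj \<i> * a + \<i> * b + \<i> * cnj \<i> * cinner (X v) v) = 0"
    using im0[of "u + \<i> *\<^sub>C v"] by simp
  hence 2: "Re b - Re a = 0" using im0[of u] im0[of v] by simp
  show ?thesis using 1 2 by (simp add: complex_eq_iff a_def[symmetric] b_def[symmetric])
qed


lemma aux: "(qp::real) \<le> mn \<Longrightarrow> 0 \<le> qm \<Longrightarrow> qp = aa + r + r' + bb \<Longrightarrow> qm = aa - r - r' + bb
  \<Longrightarrow> mn = mp + 2 * ms + mq \<Longrightarrow> r' = r \<Longrightarrow> r - ms / 2 \<le> (mp + mq) / 4"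
  by (simp add: field_simps)

lemma key:
  fixes X :: "'a::complex_inner \<Rightarrow> 'a"
  assumes lin: "clinear X" and pos: "positive_op X" and bnd: "\<And>z. norm (X z) \<le> M * norm z"
  shows "Re (cinner (X p) q) - M / 2 * Re (cinner p q) \<le> M / 4 * ((norm p)^2 + (norm q)^2)"
proof -
  have Xadd: "X (p + q) = X p + X q" for p q using lin by (simp add: clinear_def)
  define Q where "Q z = Re (cinner (X z) z)" for z
  have Qb: "0 \<le> Q z \<and> Q z \<le> M * (norm z)^2" for z
  proof -
    have "Q z \<le> cmod (cinner (X z) z)" unfolding Q_def by (rule complex_Re_le_cmod)
    also have "\<dots> \<le> norm (X z) * norm z" by (rule cs)
    also have "\<dots> \<le> M * norm z * norm z" using bnd[of z] by (simp add: mult_right_mono)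
    finally show ?thesis using pos by (simp add: Q_def positive_op_def power2_eq_square)
  qed
  have h: "Re (cinner (X q) p) = Re (cinner (X p) q)" using herm[OF lin pos, of q p] by simp
  have hp: "Re (cinner q p) = Re (cinner p q)" using cinner_commute[of q p] by simp
  have N: "(norm z)^2 = Re (cinner z z)" for z :: 'a by (simp add: ci_self_real)
  have q1: "Q (p + q) = Q p + Re (cinner (X p) q) + Re (cinner (X q) p) + Q q"
    by (simp add: Q_def Xadd cinner_add_left ci_add_right)
  have q2: "Q (p - q) = Q p - Re (cinner (X p) q) - Re (cinner (X q) p) + Q q"
    by (simp add: Q_def clinear_diff[OF lin] ci_diff_left ci_diff_right)
  have n1: "(norm (p + q))^2 = (norm p)^2 + Re (cinner p q) + Re (cinner q p) + (norm q)^2"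
    unfolding N by (simp add: cinner_add_left ci_add_right)
  have n2: "(norm (p - q))^2 = (norm p)^2 - Re (cinner p q) - Re (cinner q p) + (norm q)^2"
    unfolding N by (simp add: ci_diff_left ci_diff_right)
  have m1: "M * (norm (p + q))^2 = M * (norm p)^2 + 2 * (M * Re (cinner p q)) + M * (norm q)^2"
    using n1 hp by (simp add: algebra_simps)
  have g: "M / 4 * ((norm p)^2 + (norm q)^2) = (M * (norm p)^2 + M * (norm q)^2) / 4"
    by (simp add: algebra_simps)
  have g2: "M / 2 * Re (cinner p q) = (M * Re (cinner p q)) / 2" by simp
  have "Q (p + q) \<le> M * (norm (p + q))^2" "0 \<le> Q (p - q)" using Qb by auto
  thus ?thesis unfolding g g2 using q1 q2 m1 h by (rule aux)
qed


lemma buzano: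
  fixes X :: "'a::complex_inner \<Rightarrow> 'a"
  assumes lin: "clinear X" and pos: "positive_op X" and bnd: "\<And>z. norm (X z) \<le> M * norm z"
    and M: "M \<ge> 0"
  shows "cmod (cinner (X u) v) \<le> M / 2 * (norm u * norm v + cmod (cinner u v))"
proof (cases "cinner (X u) v = 0")
  case True thus ?thesis using M by simp
next
  case False
  define z where "z = cinner (X u) v"
  have z: "z \<noteq> 0" using False by (simp add: z_def)
  have Xsc: "X (c *\<^sub>C p) = c *\<^sub>C X p" for c p using lin by (simp add: clinear_def)
  have u: "u \<noteq> 0" using False clinear_zero[OF lin] ci_zero_left[of v] by auto
  have v: "v \<noteq> 0" using False ci_zero_right[of "X u"] by auto
  have nu: "norm u > 0" using u by simp
  have nv: "norm v > 0" using v by simp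
  define t where "t = sqrt (norm v / norm u)"
  have t: "t > 0" using nu nv by (simp add: t_def)
  have t2: "t^2 = norm v / norm u" using nu nv by (simp add: t_def)
  define \<phi> where "\<phi> = cnj z / complex_of_real (cmod z)"
  have phi1: "cmod \<phi> = 1" using z by (simp add: \<phi>_def norm_divide)
  have phiz: "\<phi> * z = complex_of_real (cmod z)"
  proof -
    have "\<phi> * z = (z * cnj z) / complex_of_real (cmod z)" by (simp add: \<phi>_def)
    also have "\<dots> = complex_of_real (cmod z) * complex_of_real (cmod z) / complex_of_real (cmod z)"
      using complex_norm_square[of z] by (simp add: power2_eq_square)
    also have "\<dots> = complex_of_real (cmod z)" using z by simp
    finally show ?thesis .
  qed
  define p where "p = (\<phi> * complex_of_real t) *\<^sub>C u"
  define q where "q = complex_of_real (1 / t) *\<^sub>C v"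
  have xpq: "cinner (X p) q = \<phi> * z"
    using t by (simp add: p_def q_def Xsc cinner_scaleC_left ci_scaleC_right z_def)
  have pq: "cinner p q = \<phi> * cinner u v"
    using t by (simp add: p_def q_def cinner_scaleC_left ci_scaleC_right)
  have "(norm p)^2 = t^2 * (norm u)^2"
    using t phi1 by (simp add: p_def norm_scaleC norm_mult power_mult_distrib)
  also have "\<dots> = norm u * norm v" using t2 nu by (simp add: power2_eq_square field_simps)
  finally have np: "(norm p)^2 = norm u * norm v" .
  have nq: "(norm q)^2 = norm u * norm v"
  proof -
    have "(norm q)^2 = (norm v)^2 / t^2" using t by (simp add: q_def norm_scaleC norm_divide power_mult_distrib power_divide)
    thus ?thesis using t2 nu by (simp add: power2_eq_square)
  qed
  have re: "Re (cinner p q) \<le> cmod (cinner u v)"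
    using complex_Re_le_cmod[of "cinner p q"] pq phi1 by (simp add: norm_mult)
  have k: "cmod z - M / 2 * Re (cinner p q) \<le> M / 4 * (2 * (norm u * norm v))"
    using key[OF lin pos bnd, of p q] xpq phiz np nq by simp
  have "M / 2 * Re (cinner p q) \<le> M / 2 * cmod (cinner u v)"
    using re M by (simp add: mult_left_mono)
  thus ?thesis using k by (simp add: z_def[symmetric] algebra_simps)
qed

theorem lemma2p7:
  fixes A X B Astar :: "'a::chilbert_space \<Rightarrow> 'a" and x y :: 'a
  assumes "bounded_clinear A" and "bounded_clinear X" and "bounded_clinear B"
    and "is_adjoint A Astar"
    and "positive_op X"
    and "B x \<noteq> 0"
  shows "cmod (cinner (A (X (B x))) y)
    \<le> onorm X / 2 * (2 * norm (B x) * norm (Astar y)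
        - (INF l\<in>(UNIV::complex set). (norm (B x - l *\<^sub>C Astar y))\<^sup>2) / (2 * norm (B x)) * norm (Astar y))"
proof -
  have lin: "clinear X" using assms(2) by (simp add: bounded_clinear_def)
  obtain K where K: "\<And>z. norm (X z) \<le> norm z * K" using assms(2) by (auto simp: bounded_clinear_def)
  have bl: "bounded_linear X"
  proof (rule bounded_linear_intro[where K=K])
    show "X (a + b) = X a + X b" for a b using lin by (simp add: clinear_def)
    show "X (r *\<^sub>R a) = r *\<^sub>R X a" for r a using lin by (simp add: clinear_def scaleR_scaleC)
    show "norm (X a) \<le> norm a * K" for a by (rule K)
  qed
  define M where "M = onorm X"
  have M: "M \<ge> 0" unfolding M_def by (rule onorm_pos_le[OF bl])
  have bnd: "norm (X z) \<le> M * norm z" for z unfolding M_def by (rule onorm[OF bl])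
  define u where "u = B x"
  define v where "v = Astar y"
  have eq: "cinner (A (X u)) y = cinner (X u) v"
    using assms(4) by (simp add: is_adjoint_def v_def)
  have u: "u \<noteq> 0" using assms(6) by (simp add: u_def)
  have nu: "norm u > 0" using u by simp
  show ?thesis
  proof (cases "v = 0")
    case True
    thus ?thesis using eq by (simp add: ci_zero_right u_def[symmetric] v_def[symmetric])
  next
    case False
    have nv: "norm v > 0" using False by simp
    define c where "c = cmod (cinner u v)"
    define a where "a = norm u * norm v"
    have a: "a > 0" using nu nv by (simp add: a_def)
    have ca: "c \<le> a" by (simp add: c_def a_def cs)
    have c0: "c \<ge> 0" by (simp add: c_def)
    define I where "I = (INF l\<in>(UNIV::complex set). (norm (u - l *\<^sub>C v))\<^sup>2)"
    define D where "D = (norm u)^2 - c^2 / (norm v)^2"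
    have ID: "I \<le> D"
    proof -
      have "bdd_below ((\<lambda>l. (norm (u - l *\<^sub>C v))\<^sup>2) ` UNIV)"
        by (rule bdd_belowI[of _ 0]) auto
      hence "I \<le> (norm (u - (cinner u v / cinner v v) *\<^sub>C v))\<^sup>2"
        unfolding I_def by (rule cINF_lower) simp
      thus ?thesis using dist_lemma[OF False, of u] by (simp add: D_def c_def)
    qed
    have Deq: "D / (2 * norm u) * norm v = (a^2 - c^2) / (2 * a)"
      using nu nv by (simp add: D_def a_def field_simps power2_eq_square)
    have "(a - c) * (a + c) \<le> (a - c) * (2 * a)"
      using ca by (intro mult_left_mono) auto
    hence h1: "a^2 - c^2 \<le> (a - c) * (2 * a)" by (simp add: power2_eq_square algebra_simps)
    have "(a^2 - c^2) / (2 * a) \<le> a - c" using a h1 by (subst pos_divide_le_eq) auto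
    hence Db: "D / (2 * norm u) * norm v \<le> a - c" using Deq by simp
    have "I / (2 * norm u) * norm v \<le> D / (2 * norm u) * norm v"
      using ID nu nv by (intro mult_right_mono divide_right_mono) auto
    hence "a + c \<le> 2 * a - I / (2 * norm u) * norm v" using Db by simp
    hence "M / 2 * (a + c) \<le> M / 2 * (2 * a - I / (2 * norm u) * norm v)"
      using M by (intro mult_left_mono) auto
    moreover have "cmod (cinner (X u) v) \<le> M / 2 * (a + c)"
      unfolding a_def c_def by (rule buzano[OF lin assms(5) bnd M])
    ultimately have "cmod (cinner (A (X u)) y) \<le> M / 2 * (2 * a - I / (2 * norm u) * norm v)"
      using eq by simp
    thus ?thesis by (simp add: M_def a_def I_def u_def v_def mult.assoc)
  qed
qed

end
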